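(* Let $p$ be a prime and $n$ a positive integer. Let $H_n(\mathbf{Q}_p)=\mathbf{Q}_p^n\times\mathbf{Q}_p^n\times\mathbf{Q}_p$ with the group operation $$(x,y,t)\diamond(x',y',t')=\Big(x+x',\,y+y',\,t+t'+\sum_{j=1}^n x_j y_j'\Big),$$ and for $r\in\mathbf{Q}_p$ let $\delta_r((x,y,t))=(rx,ry,r^2t)$. Define $$N((x,y,t))=\max(|x_1|_p,\ldots,|x_n|_p,|y_1|_p,\ldots,|y_n|_p,|t|_p^{1/2}).$$ Then for all $(x,y,t),(x',y',t')\in H_n(\mathbf{Q}_p)$ and $r\in\mathbf{Q}_p$: (i) $N((x,y,t)\diamond(x',y',t'))\le\max(N((x,y,t)),N((x',y',t')))$; (ii) $N((x,y,t)^{-1})=N((x,y,t))$, where $(x,y,t)^{-1}$ is the inverse in $H_n(\mathbf{Q}_p)$; (iii) $N(\delta_r((x,y,t)))=|r|_p\,N((x,y,t))$. Consequently $N((x',y',t')^{-1}\diamond(x,y,t))$ is a left-invariant ultrametric and $N((x,y,t)\diamond(x',y',t')^{-1})$ is a right-invariant ultrametric on $H_n(\mathbf{Q}_p)$, each determining the product topology coming from the standard topology on $\mathbf{Q}_p$.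
   Context: $|\cdot|_p$ denotes the $p$-adic absolute value on the field $\mathbf{Q}_p$ of $p$-adic numbers. The inverse in this group is $(x,y,t)^{-1}=(-x,-y,-t+\sum_j x_jy_j)$. A metric $d$ is an ultrametric if $d(x,z)\le\max(d(x,y),d(y,z))$; it is left-invariant if $d(ax,ay)=d(x,y)$ for all $a,x,y$, and right-invariant if $d(xb,yb)=d(x,y)$. *)

theory Defs
  imports "HOL-Analysis.Analysis" "HOL-Computational_Algebra.Computational_Algebra"
begin

definition padic_abs_rat :: "nat \<Rightarrow> rat \<Rightarrow> real" where
  "padic_abs_rat p q =
     (if q = 0 then 0
      else (case quotient_of q of (a, b) \<Rightarrow>
              real p powi (int (multiplicity (int p) b) - int (multiplicity (int p) a))))"

text \<open>This is the definition of Q_p as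
  the completion of (Q, |.|_p); it determines (K, av) up to unique isometric isomorphism.\<close>
definition is_Qp :: "nat \<Rightarrow> ('a::field_char_0 \<Rightarrow> real) \<Rightarrow> bool" where
  "is_Qp p av \<longleftrightarrow>
     (\<forall>x. 0 \<le> av x) \<and> (\<forall>x. av x = 0 \<longleftrightarrow> x = 0) \<and>
     (\<forall>x y. av (x * y) = av x * av y) \<and> (\<forall>x y. av (x + y) \<le> av x + av y) \<and>
     (\<forall>q. av (of_rat q) = padic_abs_rat p q) \<and>
     (\<forall>x. \<forall>e>0. \<exists>q. av (x - of_rat q) < e) \<and>
     (\<forall>X::nat \<Rightarrow> 'a. (\<forall>e>0. \<exists>M. \<forall>m\<ge>M. \<forall>k\<ge>M. av (X m - X k) < e) \<longrightarrow>
        (\<exists>L. \<forall>e>0. \<exists>M. \<forall>k\<ge>M. av (X k - L) < e))"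

definition Qp_topology :: "('a::field_char_0 \<Rightarrow> real) \<Rightarrow> 'a topology" where
  "Qp_topology av = Metric_space.mtopology UNIV (\<lambda>a b. av (a - b))"

text \<open>Heisenberg group H_n(K) = K^n x K^n x K, with the index set of K^n a finite type 'n
  (n = CARD('n)).\<close>
type_synonym ('a, 'n) heis = "('n \<Rightarrow> 'a) \<times> ('n \<Rightarrow> 'a) \<times> 'a"

definition heis_mult :: "('a::comm_ring_1, 'n::finite) heis \<Rightarrow> ('a, 'n) heis \<Rightarrow> ('a, 'n) heis"
  (infixl "\<diamondsuit>" 70) where
  "g \<diamondsuit> h = (case g of (x, y, t) \<Rightarrow> case h of (x', y', t') \<Rightarrow>
      (\<lambda>j. x j + x' j, \<lambda>j. y j + y' j, t + t' + (\<Sum>j\<in>UNIV. x j * y' j)))"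

definition heis_inv :: "('a::comm_ring_1, 'n::finite) heis \<Rightarrow> ('a, 'n) heis" where
  "heis_inv g = (case g of (x, y, t) \<Rightarrow>
      (\<lambda>j. - x j, \<lambda>j. - y j, - t + (\<Sum>j\<in>UNIV. x j * y j)))"

definition heis_dil :: "'a::comm_ring_1 \<Rightarrow> ('a, 'n::finite) heis \<Rightarrow> ('a, 'n) heis" where
  "heis_dil r g = (case g of (x, y, t) \<Rightarrow> (\<lambda>j. r * x j, \<lambda>j. r * y j, r^2 * t))"

definition heis_norm :: "('a \<Rightarrow> real) \<Rightarrow> ('a, 'n::finite) heis \<Rightarrow> real" where
  "heis_norm av g = (case g of (x, y, t) \<Rightarrow>
      Max ((\<lambda>j. av (x j)) ` UNIV \<union> (\<lambda>j. av (y j)) ` UNIV \<union> {sqrt (av t)}))"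

definition heis_prod_topology :: "'a topology \<Rightarrow> ('a, 'n::finite) heis topology" where
  "heis_prod_topology T =
     prod_topology (product_topology (\<lambda>_. T) UNIV)
       (prod_topology (product_topology (\<lambda>_. T) UNIV) T)"

end

theory Submission imports Defs begin

lemma av_basic:
  assumes "is_Qp p av"
  shows "\<And>x. 0 \<le> av x" "\<And>x. av x = 0 \<longleftrightarrow> x = 0" "\<And>x y. av (x*y) = av x * av y"
        "\<And>x y. av (x+y) \<le> av x + av y" "\<And>q. av (of_rat q) = padic_abs_rat p q"
  using assms unfolding is_Qp_def by auto

lemma av_nat:
  assumes "is_Qp p av" "prime p"
  shows "av (of_nat m) \<le> 1"
proof -
  have "(of_nat m :: 'a) = of_rat (of_int (int m))" by simp
  then have "av (of_nat m) = padic_abs_rat p (of_int (int m))" using av_basic(5)[OF assms(1)] by metis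
  also have "\<dots> \<le> 1"
  proof (cases "m = 0")
    case True then show ?thesis by (simp add: padic_abs_rat_def)
  next
    case False
    have p1: "real p \<ge> 1" using assms(2) prime_ge_1_nat by auto
    have "padic_abs_rat p (of_int (int m)) = real p powi (- int (multiplicity (int p) (int m)))"
      using False by (simp add: padic_abs_rat_def quotient_of_int)
    also have "\<dots> = inverse (real p ^ multiplicity (int p) (int m))" by (simp add: power_int_minus power_int_of_nat)
    also have "\<dots> \<le> 1" using one_le_power[OF p1, of "multiplicity (int p) (int m)"] by (simp add: inverse_le_1_iff)
    finally show ?thesis .
  qed
  finally show ?thesis .
qed

lemma av_one: assumes "is_Qp p av" shows "av 1 = 1"
proof -
  have "av 1 = av 1 * av 1" using av_basic(3)[OF assms, of 1 1] by simp
  moreover have "av 1 \<noteq> 0" using av_basic(2)[OF assms] by simp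
  ultimately show ?thesis by simp
qed

lemma av_power: assumes "is_Qp p av" shows "av (x ^ n) = av x ^ n"
  by (induction n) (simp_all add: av_one[OF assms] av_basic(3)[OF assms])

lemma av_sum_le: assumes "is_Qp p av" shows "finite A \<Longrightarrow> av (sum f A) \<le> (\<Sum>i\<in>A. av (f i))"
proof (induction A rule: finite_induct)
  case empty then show ?case using av_basic(2)[OF assms, of 0] by simp
next
  case (insert a A)
  then show ?case using av_basic(4)[OF assms, of "f a" "sum f A"] by simp
qed

lemma geom_beats_linear:
  fixes q :: real assumes "q > 1"
  shows "\<exists>n. real n + 1 < q ^ n"
proof -
  define d where "d = q - 1"
  have d: "d > 0" using assms d_def by simp
  obtain n :: nat where n: "real n \<ge> 3 / d^2 + 2" by (meson real_arch_simple)
  have "3 / d^2 \<ge> 0" using d by simp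
  then have n1: "real n \<ge> 2" using n by linarith
  have "3 / d^2 * d^2 \<le> real n * d^2" by (rule mult_right_mono) (use n in auto)
  then have n3: "3 \<le> real n * d^2" using d by simp
  have "real n * 3 \<le> real n * (real n * d^2)" by (rule mult_left_mono) (use n3 in auto)
  then have A: "2 * real n + 1 < real n * (real n * d^2)" using n1 by linarith
  have B: "1 + real n * d \<le> q ^ n" using Bernoulli_inequality[of d n] d d_def by simp
  have "(real n * d)^2 \<le> (q^n)^2" using B d n1 by (intro power_mono) auto
  moreover have "(q^n)^2 = q^(2*n)" by (simp add: power_even_eq)
  moreover have "(real n * d)^2 = real n * (real n * d^2)" by (simp add: power2_eq_square)
  ultimately have "real n * (real n * d^2) \<le> q ^ (2*n)" by simp
  then have "real (2*n) + 1 < q ^ (2*n)" using A by simp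
  then show ?thesis by blast
qed

lemma av_ultra:
  assumes "is_Qp p av" "prime p"
  shows "av (x + y) \<le> max (av x) (av y)"
proof (rule ccontr)
  define M where "M = max (av x) (av y)"
  assume "\<not> ?thesis"
  then have s: "av (x+y) > M" unfolding M_def by (auto simp: not_le)
  have M0: "M \<ge> 0" using av_basic(1)[OF assms(1)] M_def by (simp add: le_max_iff_disj)
  have Mpos: "M > 0"
  proof (rule ccontr)
    assume "\<not> M > 0" then have "M = 0" using M0 by simp
    moreover have "av x \<le> M" "av y \<le> M" unfolding M_def by simp_all
    ultimately have "av x = 0" "av y = 0" using av_basic(1)[OF assms(1), of x] av_basic(1)[OF assms(1), of y] by linarith+
    then have "x = 0" "y = 0" using av_basic(2)[OF assms(1)] by auto
    then show False using s \<open>M = 0\<close> av_basic(2)[OF assms(1), of 0] by simp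
  qed
  have bound: "av (x+y) ^ n \<le> (real n + 1) * M ^ n" for n
  proof -
    have "av (x+y) ^ n = av ((x+y)^n)" using av_power[OF assms(1)] by simp
    also have "\<dots> = av (\<Sum>k\<le>n. of_nat (n choose k) * x^k * y^(n-k))" unfolding binomial_ring ..
    also have "\<dots> \<le> (\<Sum>k\<le>n. av (of_nat (n choose k) * x^k * y^(n-k)))" by (rule av_sum_le[OF assms(1)]) simp
    also have "\<dots> \<le> (\<Sum>k\<le>n. M ^ n)"
    proof (rule sum_mono)
      fix k assume k: "k \<in> {..n}"
      have E: "av (of_nat (n choose k) * x^k * y^(n-k)) = av (of_nat (n choose k)) * (av x ^ k * av y ^ (n-k))"
        by (simp add: av_basic(3)[OF assms(1)] av_power[OF assms(1)])
      have Mk: "0 \<le> M ^ k" using M0 by simp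
      have L: "av (of_nat (n choose k)) * (av x ^ k * av y ^ (n-k)) \<le> 1 * (M ^ k * M ^ (n-k))"
        apply (rule mult_mono[OF av_nat[OF assms]])
          apply (rule mult_mono; (rule power_mono)?)
        using av_basic(1)[OF assms(1)] Mk unfolding M_def by auto
      have R: "1 * (M ^ k * M ^ (n-k)) = M ^ n" using k by (simp add: power_add[symmetric])
      show "av (of_nat (n choose k) * x^k * y^(n-k)) \<le> M ^ n" unfolding E R[symmetric] by (rule L)
    qed
    also have "\<dots> = (real n + 1) * M ^ n" by simp
    finally show ?thesis .
  qed
  obtain n where n: "real n + 1 < (av (x+y) / M) ^ n" using geom_beats_linear[of "av (x+y) / M"] s Mpos by auto
  moreover have "(av (x+y) / M) ^ n = av (x+y) ^ n / M ^ n" by (rule power_divide)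
  moreover have "M ^ n > 0" using Mpos by simp
  ultimately have "(real n + 1) * M ^ n < av (x+y) ^ n" by (simp add: pos_less_divide_eq)
  then show False using bound[of n] by simp
qed


section \<open>Group identities\<close>

lemma hm: "(x,y,t) \<diamondsuit> (x',y',t') = (\<lambda>j. x j + x' j, \<lambda>j. y j + y' j, t + t' + (\<Sum>j\<in>UNIV. x j * y' j))"
  by (simp add: heis_mult_def)
lemma hi: "heis_inv (x,y,t) = (\<lambda>j. - x j, \<lambda>j. - y j, - t + (\<Sum>j\<in>UNIV. x j * y j))"
  by (simp add: heis_inv_def)
lemma hd: "heis_dil r (x,y,t) = (\<lambda>j. r * x j, \<lambda>j. r * y j, r^2 * t)"
  by (simp add: heis_dil_def)

lemma h_assoc: fixes g :: "('a::comm_ring_1,'n::finite) heis"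
  shows "(g \<diamondsuit> h) \<diamondsuit> k = g \<diamondsuit> (h \<diamondsuit> k)"
  by (cases g; cases h; cases k) (simp add: hm sum.distrib algebra_simps)

lemma h_inv_inv: fixes g :: "('a::comm_ring_1,'n::finite) heis"
  shows "heis_inv (heis_inv g) = g"
  by (cases g) (simp add: hi)

lemma h_inv_mult: fixes g :: "('a::comm_ring_1,'n::finite) heis"
  shows "heis_inv (g \<diamondsuit> h) = heis_inv h \<diamondsuit> heis_inv g"
  by (cases g; cases h) (simp add: hm hi sum.distrib sum_subtractf sum_negf algebra_simps)

lemma h_inv_l: fixes g :: "('a::comm_ring_1,'n::finite) heis"
  shows "heis_inv g \<diamondsuit> (g \<diamondsuit> h) = h"
  by (cases g; cases h) (simp add: hm hi sum.distrib sum_subtractf sum_negf algebra_simps)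

lemma h_inv_r: fixes g :: "('a::comm_ring_1,'n::finite) heis"
  shows "g \<diamondsuit> (heis_inv g \<diamondsuit> h) = h"
  by (cases g; cases h) (simp add: hm hi sum.distrib sum_subtractf sum_negf algebra_simps)

lemma h_inv_l0: fixes g :: "('a::comm_ring_1,'n::finite) heis"
  shows "heis_inv g \<diamondsuit> g = (\<lambda>_. 0, \<lambda>_. 0, 0)"
  by (cases g) (simp add: hm hi sum.distrib sum_subtractf sum_negf algebra_simps)

lemma h_inv_r0: fixes g :: "('a::comm_ring_1,'n::finite) heis"
  shows "g \<diamondsuit> heis_inv g = (\<lambda>_. 0, \<lambda>_. 0, 0)"
  by (cases g) (simp add: hm hi sum_negf)

lemma h_unit_r: fixes g :: "('a::comm_ring_1,'n::finite) heis"
  shows "g \<diamondsuit> (\<lambda>_. 0, \<lambda>_. 0, 0) = g"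
  by (cases g) (simp add: hm)

lemma h_unit_l: fixes g :: "('a::comm_ring_1,'n::finite) heis"
  shows "(\<lambda>_. 0, \<lambda>_. 0, 0) \<diamondsuit> g = g"
  by (cases g) (simp add: hm)

lemma h_dil_dil: fixes g :: "('a::field,'n::finite) heis"
  assumes "r \<noteq> 0" shows "heis_dil (inverse r) (heis_dil r g) = g"
  using assms by (cases g) (simp add: hd power2_eq_square field_simps)


section \<open>Absolute value facts\<close>

lemma sqrt_le_sq: assumes "0 \<le> c" shows "sqrt a \<le> c \<longleftrightarrow> a \<le> c^2"
proof -
  have "sqrt (c^2) = c" using assms by simp
  then show ?thesis by (metis real_sqrt_le_iff)
qed

context
  fixes p :: nat and av :: "'a::field_char_0 \<Rightarrow> real"
  assumes Q: "is_Qp p av" and P: "prime p"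
begin

lemma av_nn: "0 \<le> av x" using av_basic(1)[OF Q] .
lemma av_0 [simp]: "av 0 = 0" using av_basic(2)[OF Q] by simp
lemma av_eq0: "av x = 0 \<longleftrightarrow> x = 0" using av_basic(2)[OF Q] .
lemma av_mult: "av (x*y) = av x * av y" using av_basic(3)[OF Q] .
lemma av_tri: "av (x+y) \<le> av x + av y" using av_basic(4)[OF Q] .

lemma av_neg [simp]: "av (- x) = av x"
proof -
  have "av (-1) ^ 2 = 1" using av_mult[of "-1" "-1"] av_one[OF Q] by (simp add: power2_eq_square)
  moreover have "av (-1) \<ge> 0" by (rule av_nn)
  ultimately have "av (-1) = 1" using power2_eq_1_iff by force
  then show ?thesis using av_mult[of "-1" x] by simp
qed

lemma av_le0: "av x \<le> 0 \<longleftrightarrow> x = 0" using av_nn[of x] av_eq0[of x] by auto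

lemma av_sub_comm: "av (a - b) = av (b - a)"
  using av_neg[of "a - b"] by simp

lemma ultra2: "av x \<le> c \<Longrightarrow> av y \<le> c \<Longrightarrow> av (x + y) \<le> c"
  using av_ultra[OF Q P, of x y] by simp

lemma ultra_sum: "0 \<le> c \<Longrightarrow> (\<And>j. j \<in> A \<Longrightarrow> av (f j) \<le> c) \<Longrightarrow> av (sum f A) \<le> c"
proof (induction A rule: infinite_finite_induct)
  case (insert a A) then show ?case by (simp add: ultra2)
qed auto

lemma ultra2_eq: assumes "a = b + c" "av b \<le> u" "av c \<le> v" shows "av a \<le> max u v"
proof -
  have "av b \<le> max u v" "av c \<le> max u v" using assms(2,3) by (simp_all add: le_max_iff_disj)
  then show ?thesis unfolding assms(1) by (rule ultra2)
qed

lemma metric_Qp: "Metric_space UNIV (\<lambda>a b. av (a - b))"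
proof
  fix x y z :: 'a
  show "0 \<le> av (x - y)" by (rule av_nn)
  show "av (x - y) = 0 \<longleftrightarrow> x = y" by (simp add: av_eq0)
  show "av (x - y) = av (y - x)" by (rule av_sub_comm)
  show "av (x - z) \<le> av (x - y) + av (y - z)" using av_tri[of "x - y" "y - z"] by simp
qed

section \<open>The norm\<close>

lemma N_le_iff: "heis_norm av ((x,y,t)::('a,'n::finite) heis) \<le> c \<longleftrightarrow>
    (\<forall>j. av (x j) \<le> c) \<and> (\<forall>j. av (y j) \<le> c) \<and> sqrt (av t) \<le> c"
  unfolding heis_norm_def by (auto simp add: Max_le_iff)

lemma N_ge:
  fixes x y :: "'n::finite \<Rightarrow> 'a"
  shows "av (x j) \<le> heis_norm av (x,y,t)" "av (y j) \<le> heis_norm av (x,y,t)"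
    "0 \<le> heis_norm av (x,y,t)" "av t \<le> (heis_norm av (x,y,t))^2"
proof -
  have A: "(\<forall>j. av (x j) \<le> heis_norm av (x,y,t)) \<and> (\<forall>j. av (y j) \<le> heis_norm av (x,y,t)) \<and> sqrt (av t) \<le> heis_norm av (x,y,t)"
    using N_le_iff[of x y t "heis_norm av (x,y,t)"] by simp
  then show "av (x j) \<le> heis_norm av (x,y,t)" "av (y j) \<le> heis_norm av (x,y,t)" by auto
  have st: "sqrt (av t) \<le> heis_norm av (x,y,t)" using A by simp
  have "0 \<le> sqrt (av t)" using av_nn[of t] by simp
  then show n0: "0 \<le> heis_norm av (x,y,t)" using st by linarith
  show "av t \<le> (heis_norm av (x,y,t))^2" using st sqrt_le_sq[OF n0, of "av t"] by simp
qed

lemma N_le_iff2: "0 \<le> c \<Longrightarrow> heis_norm av ((x,y,t)::('a,'n::finite) heis) \<le> c \<longleftrightarrow>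
    (\<forall>j. av (x j) \<le> c) \<and> (\<forall>j. av (y j) \<le> c) \<and> av t \<le> c^2"
  using N_le_iff[of x y t c] sqrt_le_sq[of c "av t"] by simp

lemma N_nn: "0 \<le> heis_norm av (g::('a,'n::finite) heis)"
  by (cases g) (simp add: N_ge)

lemma N_zero: "heis_norm av (g::('a,'n::finite) heis) = 0 \<longleftrightarrow> g = (\<lambda>_. 0, \<lambda>_. 0, 0)"
proof (cases g)
  case (fields x y t)
  have "heis_norm av g = 0 \<longleftrightarrow> heis_norm av g \<le> 0" using N_nn[of g] by auto
  also have "\<dots> \<longleftrightarrow> (\<forall>j. x j = 0) \<and> (\<forall>j. y j = 0) \<and> t = 0"
    unfolding fields by (subst N_le_iff2) (auto simp: av_le0)
  also have "\<dots> \<longleftrightarrow> g = (\<lambda>_. 0, \<lambda>_. 0, 0)" unfolding fields by (simp add: fun_eq_iff)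
  finally show ?thesis .
qed

lemma N_mult: "heis_norm av ((g::('a,'n::finite) heis) \<diamondsuit> h) \<le> max (heis_norm av g) (heis_norm av h)"
proof (cases g, cases h)
  fix x y t x' y' t' assume g: "g = (x,y,t)" and h: "h = (x',y',t')"
  define a where "a = heis_norm av (x,y,t)"
  define b where "b = heis_norm av (x',y',t')"
  define m where "m = max a b"
  have a0: "0 \<le> a" unfolding a_def by (rule N_nn)
  have m0: "0 \<le> m" unfolding m_def using a0 by (simp add: le_max_iff_disj)
  have am: "a \<le> m" and bm: "b \<le> m" unfolding m_def by auto
  have X: "av (x j) \<le> m" "av (y j) \<le> m" "av (x' j) \<le> m" "av (y' j) \<le> m" for j
    using order_trans[OF N_ge(1)[where x=x and y=y and t=t] am[unfolded a_def]]
      order_trans[OF N_ge(2)[where x=x and y=y and t=t] am[unfolded a_def]]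
      order_trans[OF N_ge(1)[where x=x' and y=y' and t=t'] bm[unfolded b_def]]
      order_trans[OF N_ge(2)[where x=x' and y=y' and t=t'] bm[unfolded b_def]] by auto
  have b0: "0 \<le> b" unfolding b_def by (rule N_nn)
  have "a^2 \<le> m^2" "b^2 \<le> m^2" using am bm a0 b0 by (auto intro: power_mono)
  then have T: "av t \<le> m^2" "av t' \<le> m^2"
    using N_ge(4)[where x=x and y=y and t=t] N_ge(4)[where x=x' and y=y' and t=t'] a_def b_def by auto
  have S: "av (x j * y' j) \<le> m^2" for j
    unfolding av_mult power2_eq_square using X m0 by (intro mult_mono) (auto simp: av_nn)
  have TS: "av (t + t' + (\<Sum>j\<in>UNIV. x j * y' j)) \<le> m^2"
    by (intro ultra2 ultra_sum) (auto simp: T S m0)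
  show ?thesis unfolding g h hm a_def[symmetric] b_def[symmetric] m_def[symmetric]
    using m0 X TS by (subst N_le_iff2) (auto intro!: ultra2)
qed

lemma N_inv_le: "heis_norm av (heis_inv (g::('a,'n::finite) heis)) \<le> heis_norm av g"
proof (cases g)
  case (fields x y t)
  define m where "m = heis_norm av (x,y,t)"
  have m0: "0 \<le> m" unfolding m_def using N_nn[of "(x,y,t)"] by simp
  have X: "av (x j) \<le> m" "av (y j) \<le> m" for j using N_ge[where x=x and y=y and t=t] fields m_def by auto
  have T: "av t \<le> m^2" using N_ge(4)[where x=x and y=y and t=t] fields m_def by auto
  have S: "av (x j * y j) \<le> m^2" for j
    unfolding av_mult power2_eq_square using X m0 by (intro mult_mono) (auto simp: av_nn)
  have TS: "av (- t + (\<Sum>j\<in>UNIV. x j * y j)) \<le> m^2"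
    by (intro ultra2 ultra_sum) (auto simp: T S m0)
  show ?thesis unfolding fields m_def[symmetric] hi
    using m0 X TS by (subst N_le_iff2) auto
qed

lemma N_inv: "heis_norm av (heis_inv (g::('a,'n::finite) heis)) = heis_norm av g"
  using N_inv_le[of g] N_inv_le[of "heis_inv g"] h_inv_inv[of g] by simp

lemma N_dil_le: "heis_norm av (heis_dil r (g::('a,'n::finite) heis)) \<le> av r * heis_norm av g"
proof (cases g)
  case (fields x y t)
  define m where "m = heis_norm av (x,y,t)"
  have m0: "0 \<le> m" unfolding m_def using N_nn[of "(x,y,t)"] by simp
  have X: "av (x j) \<le> m" "av (y j) \<le> m" for j using N_ge[where x=x and y=y and t=t] fields m_def by auto
  have T: "av t \<le> m^2" using N_ge(4)[where x=x and y=y and t=t] fields m_def by auto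
  have "av (r^2 * t) \<le> (av r * m)^2"
    using T by (simp add: av_mult av_power[OF Q] power_mult_distrib mult_left_mono av_nn)
  then show ?thesis unfolding fields m_def[symmetric] hd
    using m0 X by (subst N_le_iff2) (auto simp: av_mult av_nn mult_left_mono)
qed

lemma N_dil: "heis_norm av (heis_dil r (g::('a,'n::finite) heis)) = av r * heis_norm av g"
proof (cases "r = 0")
  case True
  then have "heis_norm av (heis_dil r g) \<le> 0" using N_dil_le[of r g] by simp
  then show ?thesis using N_nn[of "heis_dil r g"] True by (simp add: av_eq0)
next
  case False
  have "heis_norm av g \<le> av (inverse r) * heis_norm av (heis_dil r g)"
    using N_dil_le[of "inverse r" "heis_dil r g"] by (simp add: h_dil_dil[OF False])
  moreover have "av (inverse r) * av r = 1" using av_mult[of "inverse r" r] False av_one[OF Q] by simp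
  moreover have "av r > 0" using av_nn[of r] av_eq0[of r] False by (simp add: order_le_less)
  ultimately have "av r * heis_norm av g \<le> av r * (av (inverse r) * heis_norm av (heis_dil r g))"
    by (intro mult_left_mono) auto
  also have "\<dots> = (av (inverse r) * av r) * heis_norm av (heis_dil r g)" by (simp only: mult_ac)
  also have "\<dots> = heis_norm av (heis_dil r g)" using \<open>av (inverse r) * av r = 1\<close> by simp
  finally have "av r * heis_norm av g \<le> heis_norm av (heis_dil r g)" .
  then show ?thesis using N_dil_le[of r g] by (rule order_antisym[rotated])
qed

end


lemma arith1:
  fixes \<epsilon> K d :: real
  assumes "\<epsilon> > 0" "K \<ge> 0" "0 \<le> d" "d < min 1 (\<epsilon> / (K+1))"
  shows "max (d^2) (K * d) < \<epsilon>"
proof -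
  have d1: "d \<le> 1" and dl: "d < \<epsilon> / (K+1)" using assms by auto
  have "\<epsilon> / (K+1) \<le> \<epsilon>" using assms by (simp add: divide_le_eq)
  have "d^2 \<le> d" using d1 assms(3) by (simp add: power2_eq_square mult_left_le)
  then have A: "d^2 < \<epsilon>" using dl \<open>\<epsilon> / (K+1) \<le> \<epsilon>\<close> by linarith
  have "K * d \<le> (K+1) * d" using assms(3) by (simp add: algebra_simps)
  also have "\<dots> < (K+1) * (\<epsilon> / (K+1))" using dl assms(2) by (intro mult_strict_left_mono) auto
  also have "\<dots> = \<epsilon>" using assms(2) by simp
  finally show ?thesis using A by simp
qed

lemma arith2:
  fixes \<epsilon> K e :: real
  assumes "\<epsilon> > 0" "K \<ge> 0" "e = min (\<epsilon>/2) (\<epsilon>^2 / (2*(K+1)))"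
  shows "e > 0" "max e (sqrt (max e (K*e))) < \<epsilon>"
proof -
  show "e > 0" using assms by simp
  have e1: "e \<le> \<epsilon>/2" unfolding assms(3) by (rule min.cobounded1)
  have e2: "e \<le> \<epsilon>^2 / (2*(K+1))" unfolding assms(3) by (rule min.cobounded2)
  have h1: "\<epsilon>^2 / (2*(K+1)) \<le> \<epsilon>^2/2" using assms by (intro divide_left_mono) auto
  have h2: "\<epsilon>^2/2 < \<epsilon>^2" using assms(1) by simp
  have A: "e < \<epsilon>^2" using e2 h1 h2 by linarith
  have e0: "0 < e" using assms by simp
  have "K * e \<le> (K+1) * e" using e0 by (simp add: algebra_simps)
  also have "\<dots> \<le> (K+1) * (\<epsilon>^2 / (2*(K+1)))" using e2 assms(2) by (intro mult_left_mono) auto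
  also have "\<dots> = \<epsilon>^2/2"
  proof -
    have "K + 1 > 0" using assms(2) by simp
    then show ?thesis by (simp add: field_simps)
  qed
  also have "\<dots> < \<epsilon>^2" by (rule h2)
  finally have "max e (K*e) < \<epsilon>^2" using A by simp
  then have "sqrt (max e (K*e)) < sqrt (\<epsilon>^2)" by (rule real_sqrt_less_mono)
  moreover have "sqrt (\<epsilon>^2) = \<epsilon>" using assms(1) by simp
  ultimately have "sqrt (max e (K*e)) < \<epsilon>" by simp
  moreover have "e < \<epsilon>" using e1 assms(1) by linarith
  ultimately show "max e (sqrt (max e (K*e))) < \<epsilon>" by simp
qed


context
  fixes p :: nat and av :: "'a::field_char_0 \<Rightarrow> real"
  assumes Q: "is_Qp p av" and P: "prime p"
begin

lemma xy_bound:
  assumes "\<And>j. av (u j) \<le> A" "\<And>j. av (v j) \<le> B" "0 \<le> A" "0 \<le> B"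
  shows "av (\<Sum>j\<in>(UNIV::'n::finite set). u j * v j) \<le> A * B"
proof (rule ultra_sum[OF Q P])
  show "0 \<le> A * B" using assms by simp
  fix j show "av (u j * v j) \<le> A * B" unfolding av_mult[OF Q P]
    using assms by (intro mult_mono) (auto simp: av_nn[OF Q P])
qed

lemma L_b1:
  fixes x y x' y' :: "'n::finite \<Rightarrow> 'a" and t t' :: 'a
  shows "av (x' j - x j) \<le> heis_norm av (heis_inv (x,y,t) \<diamondsuit> (x',y',t'))"
        "av (y' j - y j) \<le> heis_norm av (heis_inv (x,y,t) \<diamondsuit> (x',y',t'))"
  unfolding hi hm using N_ge[OF Q P] by auto

lemma L_b2:
  fixes x y x' y' :: "'n::finite \<Rightarrow> 'a" and t t' :: 'a
  defines "D \<equiv> heis_norm av (heis_inv (x,y,t) \<diamondsuit> (x',y',t'))"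
  shows "av (t' - t) \<le> max (D^2) (heis_norm av (x,y,t) * D)"
proof -
  define K where "K = heis_norm av (x,y,t)"
  define T where "T = - t + (\<Sum>j\<in>UNIV. x j * y j) + t' + (\<Sum>j\<in>UNIV. - x j * y' j)"
  have K0: "0 \<le> K" "0 \<le> D" unfolding K_def D_def by (rule N_nn[OF Q P])+
  have A: "av T \<le> D^2" unfolding D_def T_def hi hm using N_ge(4)[OF Q P] by simp
  have B: "av (\<Sum>j\<in>UNIV. x j * (y' j - y j)) \<le> K * D"
    apply (rule xy_bound)
    using N_ge(1)[OF Q P, where x=x and y=y and t=t] L_b1(2)[where x=x and y=y and t=t and x'=x' and y'=y' and t'=t'] K0 unfolding K_def D_def by auto
  have E: "t' - t = T + (\<Sum>j\<in>UNIV. x j * (y' j - y j))"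
    unfolding T_def by (simp add: right_diff_distrib sum_subtractf sum_negf)
  show ?thesis unfolding K_def[symmetric]
    by (rule ultra2_eq[OF Q P E A B])
qed

lemma L_b3:
  fixes x y x' y' :: "'n::finite \<Rightarrow> 'a" and t t' :: 'a
  assumes "0 \<le> e" "\<And>j. av (x' j - x j) \<le> e" "\<And>j. av (y' j - y j) \<le> e" "av (t' - t) \<le> e"
  shows "heis_norm av (heis_inv (x,y,t) \<diamondsuit> (x',y',t')) \<le> max e (sqrt (max e (heis_norm av (x,y,t) * e)))"
proof -
  define K where "K = heis_norm av (x,y,t)"
  have K0: "0 \<le> K" unfolding K_def by (rule N_nn[OF Q P])
  have B: "av (\<Sum>j\<in>UNIV. x j * (y j - y' j)) \<le> K * e"
    apply (rule xy_bound)
    using N_ge(1)[OF Q P, where x=x and y=y and t=t] assms(1,3) K0 av_sub_comm[OF Q P] unfolding K_def by auto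
  have E: "- t + (\<Sum>j\<in>UNIV. x j * y j) + t' + (\<Sum>j\<in>UNIV. - x j * y' j) = (t' - t) + (\<Sum>j\<in>UNIV. x j * (y j - y' j))"
    by (simp add: right_diff_distrib sum_subtractf sum_negf)
  have "av (- t + (\<Sum>j\<in>UNIV. x j * y j) + t' + (\<Sum>j\<in>UNIV. - x j * y' j)) \<le> max e (K * e)"
    by (rule ultra2_eq[OF Q P E assms(4) B])
  then have "sqrt (av (- t + (\<Sum>j\<in>UNIV. x j * y j) + t' + (\<Sum>j\<in>UNIV. - x j * y' j))) \<le> max e (sqrt (max e (K * e)))"
    by (meson max.cobounded2 order_trans real_sqrt_le_mono)
  then show ?thesis unfolding hi hm K_def[symmetric] using assms(2,3)
    by (subst N_le_iff[OF Q P]) (auto intro: order_trans simp: le_max_iff_disj)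
qed

lemma R_b1:
  fixes x y x' y' :: "'n::finite \<Rightarrow> 'a" and t t' :: 'a
  shows "av (x' j - x j) \<le> heis_norm av ((x',y',t') \<diamondsuit> heis_inv (x,y,t))"
        "av (y' j - y j) \<le> heis_norm av ((x',y',t') \<diamondsuit> heis_inv (x,y,t))"
  unfolding hi hm using N_ge[OF Q P] by auto

lemma R_b2:
  fixes x y x' y' :: "'n::finite \<Rightarrow> 'a" and t t' :: 'a
  defines "D \<equiv> heis_norm av ((x',y',t') \<diamondsuit> heis_inv (x,y,t))"
  shows "av (t' - t) \<le> max (D^2) (heis_norm av (x,y,t) * D)"
proof -
  define K where "K = heis_norm av (x,y,t)"
  define T where "T = t' + (- t + (\<Sum>j\<in>UNIV. x j * y j)) + (\<Sum>j\<in>UNIV. x' j * - y j)"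
  have K0: "0 \<le> K" "0 \<le> D" unfolding K_def D_def by (rule N_nn[OF Q P])+
  have A: "av T \<le> D^2" unfolding D_def T_def hi hm using N_ge(4)[OF Q P] by simp
  have B: "av (\<Sum>j\<in>UNIV. y j * (x' j - x j)) \<le> K * D"
    apply (rule xy_bound)
    using N_ge(2)[OF Q P, where x=x and y=y and t=t] R_b1(1)[where x=x and y=y and t=t and x'=x' and y'=y' and t'=t'] K0 unfolding K_def D_def by auto
  have E: "t' - t = T + (\<Sum>j\<in>UNIV. y j * (x' j - x j))"
    unfolding T_def by (simp add: right_diff_distrib sum_subtractf sum_negf mult.commute)
  show ?thesis unfolding K_def[symmetric]
    by (rule ultra2_eq[OF Q P E A B])
qed

lemma R_b3:
  fixes x y x' y' :: "'n::finite \<Rightarrow> 'a" and t t' :: 'a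
  assumes "0 \<le> e" "\<And>j. av (x' j - x j) \<le> e" "\<And>j. av (y' j - y j) \<le> e" "av (t' - t) \<le> e"
  shows "heis_norm av ((x',y',t') \<diamondsuit> heis_inv (x,y,t)) \<le> max e (sqrt (max e (heis_norm av (x,y,t) * e)))"
proof -
  define K where "K = heis_norm av (x,y,t)"
  have K0: "0 \<le> K" unfolding K_def by (rule N_nn[OF Q P])
  have B: "av (\<Sum>j\<in>UNIV. y j * (x j - x' j)) \<le> K * e"
    apply (rule xy_bound)
    using N_ge(2)[OF Q P, where x=x and y=y and t=t] assms(1,2) K0 av_sub_comm[OF Q P] unfolding K_def by auto
  have E: "t' + (- t + (\<Sum>j\<in>UNIV. x j * y j)) + (\<Sum>j\<in>UNIV. x' j * - y j) = (t' - t) + (\<Sum>j\<in>UNIV. y j * (x j - x' j))"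
    by (simp add: right_diff_distrib sum_subtractf sum_negf mult.commute)
  have "av (t' + (- t + (\<Sum>j\<in>UNIV. x j * y j)) + (\<Sum>j\<in>UNIV. x' j * - y j)) \<le> max e (K * e)"
    by (rule ultra2_eq[OF Q P E assms(4) B])
  then have "sqrt (av (t' + (- t + (\<Sum>j\<in>UNIV. x j * y j)) + (\<Sum>j\<in>UNIV. x' j * - y j))) \<le> max e (sqrt (max e (K * e)))"
    by (meson max.cobounded2 order_trans real_sqrt_le_mono)
  then show ?thesis unfolding hi hm K_def[symmetric] using assms(2,3)
    by (subst N_le_iff[OF Q P]) (auto intro: order_trans simp: le_max_iff_disj)
qed

end


lemma topo_eq:
  fixes p :: nat and av :: "'a::field_char_0 \<Rightarrow> real"
    and d :: "('a,'n::finite) heis \<Rightarrow> ('a,'n) heis \<Rightarrow> real"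
  assumes Q: "is_Qp p av" and P: "prime p"
  assumes D: "Metric_space UNIV d"
  and c1: "\<And>x y t x' y' t' j. av (x' j - x j) \<le> d (x,y,t) (x',y',t')"
  and c2: "\<And>x y t x' y' t' j. av (y' j - y j) \<le> d (x,y,t) (x',y',t')"
  and c3: "\<And>x y t. \<exists>K\<ge>0. \<forall>x' y' t'. av (t' - t) \<le> max ((d (x,y,t) (x',y',t'))^2) (K * d (x,y,t) (x',y',t'))"
  and c4: "\<And>x y t. \<exists>K\<ge>0. \<forall>x' y' t' e. 0 \<le> e \<longrightarrow> (\<forall>j. av (x' j - x j) \<le> e) \<longrightarrow> (\<forall>j. av (y' j - y j) \<le> e)
              \<longrightarrow> av (t' - t) \<le> e \<longrightarrow> d (x,y,t) (x',y',t') \<le> max e (sqrt (max e (K*e)))"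
  shows "Metric_space.mtopology UNIV d = heis_prod_topology (Qp_topology av)"
proof -
  interpret D: Metric_space UNIV d by (rule D)
  interpret Qm: Metric_space UNIV "\<lambda>a b. av (a - b)" by (rule metric_Qp[OF Q P])
  have QT: "Qp_topology av = Qm.mtopology" by (simp add: Qp_topology_def)
  have top: "topspace (heis_prod_topology (Qp_topology av) :: ('a,'n) heis topology) = UNIV"
    unfolding heis_prod_topology_def QT by (simp add: PiE_UNIV_domain)
  have cont: "continuous_map D.mtopology Qm.mtopology f"
    if "\<And>a \<epsilon>. \<epsilon> > 0 \<Longrightarrow> \<exists>\<delta>>0. \<forall>z. d a z < \<delta> \<longrightarrow> av (f a - f z) < \<epsilon>" for f
    using that by (subst D.metric_continuous_map[OF metric_Qp[OF Q P]]) auto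
  have A1: "continuous_map D.mtopology Qm.mtopology (\<lambda>x. fst x k)" for k
  proof (rule cont)
    fix a :: "('a,'n) heis" and \<epsilon> :: real assume "\<epsilon> > 0"
    show "\<exists>\<delta>>0. \<forall>z. d a z < \<delta> \<longrightarrow> av (fst a k - fst z k) < \<epsilon>"
    proof (intro exI[of _ \<epsilon>] conjI allI impI)
      fix z :: "('a,'n) heis" assume "d a z < \<epsilon>"
      moreover have "av (fst z k - fst a k) \<le> d a z"
        using c1[where x="fst a" and y="fst (snd a)" and t="snd (snd a)" and x'="fst z" and j=k and y'="fst (snd z)" and t'="snd (snd z)"]
        by simp
      ultimately show "av (fst a k - fst z k) < \<epsilon>"
        using av_sub_comm[OF Q P, of "fst a k" "fst z k"] by linarith
    qed (fact)
  qed
  have A2: "continuous_map D.mtopology Qm.mtopology (\<lambda>x. fst (snd x) k)" for k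
  proof (rule cont)
    fix a :: "('a,'n) heis" and \<epsilon> :: real assume "\<epsilon> > 0"
    show "\<exists>\<delta>>0. \<forall>z. d a z < \<delta> \<longrightarrow> av (fst (snd a) k - fst (snd z) k) < \<epsilon>"
    proof (intro exI[of _ \<epsilon>] conjI allI impI)
      fix z :: "('a,'n) heis" assume "d a z < \<epsilon>"
      moreover have "av (fst (snd z) k - fst (snd a) k) \<le> d a z"
        using c2[where x="fst a" and y="fst (snd a)" and t="snd (snd a)" and x'="fst z" and j=k and y'="fst (snd z)" and t'="snd (snd z)"]
        by simp
      ultimately show "av (fst (snd a) k - fst (snd z) k) < \<epsilon>"
        using av_sub_comm[OF Q P, of "fst (snd a) k" "fst (snd z) k"] by linarith
    qed (fact)
  qed
  have A3: "continuous_map D.mtopology Qm.mtopology (\<lambda>x. snd (snd x))"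
  proof (rule cont)
    fix a :: "('a,'n) heis" and \<epsilon> :: real assume e: "\<epsilon> > 0"
    obtain x y t where a: "a = (x,y,t)" by (cases a) auto
    obtain K where K: "K \<ge> 0" "\<forall>x' y' t'. av (t' - t) \<le> max ((d (x,y,t) (x',y',t'))^2) (K * d (x,y,t) (x',y',t'))"
      using c3[where x=x and y=y and t=t] by blast
    show "\<exists>\<delta>>0. \<forall>z. d a z < \<delta> \<longrightarrow> av (snd (snd a) - snd (snd z)) < \<epsilon>"
    proof (intro exI[of _ "min 1 (\<epsilon> / (K+1))"] conjI allI impI)
      show "0 < min 1 (\<epsilon> / (K+1))" using e K by simp
      fix z :: "('a,'n) heis" assume dz: "d a z < min 1 (\<epsilon> / (K+1))"
      obtain x' y' t' where z: "z = (x',y',t')" by (cases z) auto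
      have M: "max ((d a z)^2) (K * d a z) < \<epsilon>"
        by (rule arith1[OF e K(1) D.nonneg dz])
      have K2: "av (t' - t) \<le> max ((d a z)^2) (K * d a z)"
        using spec[OF spec[OF spec[OF K(2), of x'], of y'], of t'] unfolding a z .
      have "av (t' - t) < \<epsilon>" by (rule le_less_trans[OF K2 M])
      then show "av (snd (snd a) - snd (snd z)) < \<epsilon>"
        using av_sub_comm[OF Q P, of t t'] unfolding a z by simp
    qed
  qed
  have C1: "continuous_map D.mtopology (heis_prod_topology (Qp_topology av)) id"
    unfolding heis_prod_topology_def QT continuous_map_pairwise continuous_map_componentwise_UNIV o_def id_def
    using A1 A2 A3 by simp
  have C2: "continuous_map (heis_prod_topology (Qp_topology av)) D.mtopology id"
    unfolding D.continuous_map_to_metric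
  proof (intro ballI allI impI)
    fix g :: "('a,'n) heis" and \<epsilon> :: real assume e: "\<epsilon> > 0"
    obtain x y t where g: "g = (x,y,t)" by (cases g) auto
    obtain K where K: "K \<ge> 0" "\<forall>x' y' t' e. 0 \<le> e \<longrightarrow> (\<forall>j. av (x' j - x j) \<le> e) \<longrightarrow> (\<forall>j. av (y' j - y j) \<le> e)
              \<longrightarrow> av (t' - t) \<le> e \<longrightarrow> d (x,y,t) (x',y',t') \<le> max e (sqrt (max e (K*e)))"
      using c4[where x=x and y=y and t=t] by blast
    define e where "e = min (\<epsilon>/2) (\<epsilon>^2 / (2*(K+1)))"
    have e0: "e > 0" and ee: "max e (sqrt (max e (K*e))) < \<epsilon>" using arith2[OF e K(1) e_def] by auto
    define U where "U = (PiE UNIV (\<lambda>j. Qm.mball (x j) e)) \<times> (PiE UNIV (\<lambda>j. Qm.mball (y j) e) \<times> Qm.mball t e)"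
    show "\<exists>U. openin (heis_prod_topology (Qp_topology av)) U \<and> g \<in> U \<and> (\<forall>h\<in>U. id h \<in> D.mball (id g) \<epsilon>)"
    proof (intro exI[of _ U] conjI ballI)
      show "openin (heis_prod_topology (Qp_topology av)) U"
        unfolding heis_prod_topology_def QT U_def
        by (simp add: openin_prod_Times_iff openin_PiE)
      show "g \<in> U" unfolding U_def g using e0 by (auto simp: PiE_UNIV_domain av_0[OF Q P])
      fix h assume "h \<in> U"
      obtain x' y' t' where h: "h = (x',y',t')" by (cases h) auto
      have hx: "av (x' j - x j) \<le> e" "av (y' j - y j) \<le> e" for j
        using \<open>h \<in> U\<close> unfolding U_def h by (auto simp: PiE_UNIV_domain Pi_iff av_sub_comm[OF Q P] intro: less_imp_le)
      have ht: "av (t' - t) \<le> e"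
        using \<open>h \<in> U\<close> unfolding U_def h by (auto simp: av_sub_comm[OF Q P] intro: less_imp_le)
      have "d g h \<le> max e (sqrt (max e (K*e)))" unfolding g h
        by (rule K(2)[rule_format]) (use e0 hx ht in auto)
      then have "d g h < \<epsilon>" using ee by (rule le_less_trans)
      then show "id h \<in> D.mball (id g) \<epsilon>" by simp
    qed
  qed
  show ?thesis
  proof (rule topology_eq[THEN iffD2], intro allI iffI)
    fix S :: "('a,'n) heis set" assume "openin D.mtopology S"
    then show "openin (heis_prod_topology (Qp_topology av)) S"
      using topology_finer_continuous_id[of D.mtopology "heis_prod_topology (Qp_topology av)"] C2 top by auto
  next
    fix S :: "('a,'n) heis set" assume "openin (heis_prod_topology (Qp_topology av)) S"
    then show "openin D.mtopology S"
      using topology_finer_continuous_id[of "heis_prod_topology (Qp_topology av)" D.mtopology] C1 top by auto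
  qed
qed

theorem mainTheorem1:
  fixes p :: nat and av :: "'a::field_char_0 \<Rightarrow> real"
  assumes "prime p" and "is_Qp p av"
  shows "(\<forall>(g::('a,'n::finite) heis) h.
            heis_norm av (g \<diamondsuit> h) \<le> max (heis_norm av g) (heis_norm av h))
       \<and> (\<forall>(g::('a,'n) heis). heis_norm av (heis_inv g) = heis_norm av g)
       \<and> (\<forall>r (g::('a,'n) heis). heis_norm av (heis_dil r g) = av r * heis_norm av g)
       \<and> (let dL = (\<lambda>(g::('a,'n) heis) h. heis_norm av (heis_inv h \<diamondsuit> g)) in
            Metric_space UNIV dL
          \<and> (\<forall>g h k. dL g k \<le> max (dL g h) (dL h k))
          \<and> (\<forall>a g h. dL (a \<diamondsuit> g) (a \<diamondsuit> h) = dL g h)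
          \<and> Metric_space.mtopology UNIV dL = heis_prod_topology (Qp_topology av))
       \<and> (let dR = (\<lambda>(g::('a,'n) heis) h. heis_norm av (g \<diamondsuit> heis_inv h)) in
            Metric_space UNIV dR
          \<and> (\<forall>g h k. dR g k \<le> max (dR g h) (dR h k))
          \<and> (\<forall>b g h. dR (g \<diamondsuit> b) (h \<diamondsuit> b) = dR g h)
          \<and> Metric_space.mtopology UNIV dR = heis_prod_topology (Qp_topology av))"
proof -
  note Q = assms(2) and P = assms(1)
  have i: "\<forall>(g::('a,'n::finite) heis) h. heis_norm av (g \<diamondsuit> h) \<le> max (heis_norm av g) (heis_norm av h)"
    using N_mult[OF Q P] by blast
  have ii: "\<forall>(g::('a,'n) heis). heis_norm av (heis_inv g) = heis_norm av g"
    using N_inv[OF Q P] by blast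
  have iii: "\<forall>r (g::('a,'n) heis). heis_norm av (heis_dil r g) = av r * heis_norm av g"
    using N_dil[OF Q P] by blast
  define dL where "dL = (\<lambda>(g::('a,'n) heis) h. heis_norm av (heis_inv h \<diamondsuit> g))"
  define dR where "dR = (\<lambda>(g::('a,'n) heis) h. heis_norm av (g \<diamondsuit> heis_inv h))"
  have dL_sym: "dL g h = heis_norm av (heis_inv g \<diamondsuit> h)" for g h
  proof -
    have "heis_inv (heis_inv h \<diamondsuit> g) = heis_inv g \<diamondsuit> h" by (simp add: h_inv_mult h_inv_inv)
    then show ?thesis unfolding dL_def using N_inv[OF Q P, of "heis_inv h \<diamondsuit> g"] by simp
  qed
  have dR_sym: "dR g h = heis_norm av (h \<diamondsuit> heis_inv g)" for g h
  proof -
    have "heis_inv (g \<diamondsuit> heis_inv h) = h \<diamondsuit> heis_inv g" by (simp add: h_inv_mult h_inv_inv)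
    then show ?thesis unfolding dR_def using N_inv[OF Q P, of "g \<diamondsuit> heis_inv h"] by simp
  qed
  have L_ultra: "dL g k \<le> max (dL g h) (dL h k)" for g h k
  proof -
    have "heis_inv k \<diamondsuit> g = (heis_inv k \<diamondsuit> h) \<diamondsuit> (heis_inv h \<diamondsuit> g)" by (simp add: h_assoc h_inv_r)
    then show ?thesis unfolding dL_def using N_mult[OF Q P, of "heis_inv k \<diamondsuit> h" "heis_inv h \<diamondsuit> g"]
      by (simp add: max.commute)
  qed
  have R_ultra: "dR g k \<le> max (dR g h) (dR h k)" for g h k
  proof -
    have "g \<diamondsuit> heis_inv k = (g \<diamondsuit> heis_inv h) \<diamondsuit> (h \<diamondsuit> heis_inv k)" by (simp add: h_assoc h_inv_l)
    then show ?thesis unfolding dR_def using N_mult[OF Q P, of "g \<diamondsuit> heis_inv h" "h \<diamondsuit> heis_inv k"]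
      by simp
  qed
  have L_metric: "Metric_space UNIV dL"
  proof
    fix x y z :: "('a,'n) heis"
    show "0 \<le> dL x y" unfolding dL_def by (rule N_nn[OF Q P])
    show "dL x y = dL y x" using dL_sym[of y x] by (simp add: dL_def)
    show "dL x y = 0 \<longleftrightarrow> x = y"
    proof
      assume "dL x y = 0"
      then have "heis_inv y \<diamondsuit> x = (\<lambda>_. 0, \<lambda>_. 0, 0)" unfolding dL_def by (rule N_zero[OF Q P, THEN iffD1])
      then have "y \<diamondsuit> (heis_inv y \<diamondsuit> x) = y" by (simp add: h_unit_r)
      then show "x = y" by (simp add: h_inv_r)
    next
      assume "x = y" then show "dL x y = 0" unfolding dL_def by (intro N_zero[OF Q P, THEN iffD2]) (simp add: h_inv_l0)
    qed
    have "dL x z \<le> max (dL x y) (dL y z)" by (rule L_ultra)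
    also have "\<dots> \<le> dL x y + dL y z"
    proof -
      have "0 \<le> dL x y" "0 \<le> dL y z" unfolding dL_def by (rule N_nn[OF Q P])+
      then show ?thesis by (simp add: max_def)
    qed
    finally show "dL x z \<le> dL x y + dL y z" .
  qed
  have R_metric: "Metric_space UNIV dR"
  proof
    fix x y z :: "('a,'n) heis"
    show "0 \<le> dR x y" unfolding dR_def by (rule N_nn[OF Q P])
    show "dR x y = dR y x" using dR_sym[of y x] by (simp add: dR_def)
    show "dR x y = 0 \<longleftrightarrow> x = y"
    proof
      assume "dR x y = 0"
      then have "x \<diamondsuit> heis_inv y = (\<lambda>_. 0, \<lambda>_. 0, 0)" unfolding dR_def by (rule N_zero[OF Q P, THEN iffD1])
      then have "(x \<diamondsuit> heis_inv y) \<diamondsuit> y = y" by (simp add: h_unit_l)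
      then show "x = y" by (simp add: h_assoc h_inv_l0 h_unit_r)
    next
      assume "x = y" then show "dR x y = 0" unfolding dR_def by (intro N_zero[OF Q P, THEN iffD2]) (simp add: h_inv_r0)
    qed
    have "dR x z \<le> max (dR x y) (dR y z)" by (rule R_ultra)
    also have "\<dots> \<le> dR x y + dR y z"
    proof -
      have "0 \<le> dR x y" "0 \<le> dR y z" unfolding dR_def by (rule N_nn[OF Q P])+
      then show ?thesis by (simp add: max_def)
    qed
    finally show "dR x z \<le> dR x y + dR y z" .
  qed
  have L_inv: "dL (a \<diamondsuit> g) (a \<diamondsuit> h) = dL g h" for a g h
  proof -
    have "heis_inv (a \<diamondsuit> h) \<diamondsuit> (a \<diamondsuit> g) = heis_inv h \<diamondsuit> g" by (simp add: h_inv_mult h_assoc h_inv_l)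
    then show ?thesis unfolding dL_def by simp
  qed
  have R_inv: "dR (g \<diamondsuit> b) (h \<diamondsuit> b) = dR g h" for b g h
  proof -
    have "(g \<diamondsuit> b) \<diamondsuit> heis_inv (h \<diamondsuit> b) = g \<diamondsuit> heis_inv h" by (simp add: h_inv_mult h_assoc h_inv_r)
    then show ?thesis unfolding dR_def by simp
  qed
  have L_top: "Metric_space.mtopology UNIV dL = heis_prod_topology (Qp_topology av)"
  proof (rule topo_eq[OF Q P L_metric])
    fix x y t x' y' t' j
    show "av (x' j - x j) \<le> dL (x,y,t) (x',y',t')" unfolding dL_sym by (rule L_b1(1)[OF Q P])
    show "av (y' j - y j) \<le> dL (x,y,t) (x',y',t')" unfolding dL_sym by (rule L_b1(2)[OF Q P])
  next
    fix x y t :: "_"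
    show "\<exists>K\<ge>0. \<forall>x' y' t'. av (t' - t) \<le> max ((dL (x,y,t) (x',y',t'))^2) (K * dL (x,y,t) (x',y',t'))"
      unfolding dL_sym using L_b2[OF Q P] N_nn[OF Q P] by blast
    show "\<exists>K\<ge>0. \<forall>x' y' t' e. 0 \<le> e \<longrightarrow> (\<forall>j. av (x' j - x j) \<le> e) \<longrightarrow> (\<forall>j. av (y' j - y j) \<le> e)
              \<longrightarrow> av (t' - t) \<le> e \<longrightarrow> dL (x,y,t) (x',y',t') \<le> max e (sqrt (max e (K*e)))"
      unfolding dL_sym using L_b3[OF Q P] N_nn[OF Q P] by blast
  qed
  have R_top: "Metric_space.mtopology UNIV dR = heis_prod_topology (Qp_topology av)"
  proof (rule topo_eq[OF Q P R_metric])
    fix x y t x' y' t' j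
    show "av (x' j - x j) \<le> dR (x,y,t) (x',y',t')" unfolding dR_sym by (rule R_b1(1)[OF Q P])
    show "av (y' j - y j) \<le> dR (x,y,t) (x',y',t')" unfolding dR_sym by (rule R_b1(2)[OF Q P])
  next
    fix x y t :: "_"
    show "\<exists>K\<ge>0. \<forall>x' y' t'. av (t' - t) \<le> max ((dR (x,y,t) (x',y',t'))^2) (K * dR (x,y,t) (x',y',t'))"
      unfolding dR_sym using R_b2[OF Q P] N_nn[OF Q P] by blast
    show "\<exists>K\<ge>0. \<forall>x' y' t' e. 0 \<le> e \<longrightarrow> (\<forall>j. av (x' j - x j) \<le> e) \<longrightarrow> (\<forall>j. av (y' j - y j) \<le> e)
              \<longrightarrow> av (t' - t) \<le> e \<longrightarrow> dR (x,y,t) (x',y',t') \<le> max e (sqrt (max e (K*e)))"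
      unfolding dR_sym using R_b3[OF Q P] N_nn[OF Q P] by blast
  qed
  show ?thesis
    unfolding Let_def dL_def[symmetric] dR_def[symmetric]
    using i ii iii L_metric L_ultra L_inv L_top R_metric R_ultra R_inv R_top by blast
qed
end
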